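(* Let $f:\mathbb{R}^p\to\mathbb{R}\cup\{+\infty\}$ be $\mu_f$-strongly convex and $L_f$-smooth, and $g:\mathbb{R}^p\to\mathbb{R}\cup\{+\infty\}$ proper, closed, convex. Fix $x^0\in\operatorname{dom} f\cap\operatorname{dom} g$, $\xi^0\in\partial g(x^0)$, and for $\tau\in(0,1]$ let $x^\ast_\tau$ be the minimizer of $\tau f(x)-(1-\tau)\langle\xi^0,x\rangle+g(x)$. Let $0<m\le L<+\infty$ satisfy $\omega:=\frac1m\sqrt{(L-2\mu_f)m+L_f^2}<1$. Let $\{\tau_k\}\subset(0,1]$ and let $\{x^k\}$ be generated by $x^{k+1}:=\operatorname{prox}^{H_k}_{\frac{1}{\tau_{k+1}}g}\big(x^k-H_k^{-1}(\nabla f(x^k)-(\tfrac{1}{\tau_{k+1}}-1)\xi^0)\big)$ with $H_k\in\mathbb{S}^p_{++}$, $m\mathbb{I}\preceq H_k\preceq L\mathbb{I}$. Then $$\|x^{k+1}-x^\ast_{\tau_{k+1}}\|_2\le\omega\|x^k-x^\ast_{\tau_{k+1}}\|_2.$$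
   Context: $L_f$-smooth: $\|\nabla f(x)-\nabla f(y)\|_2\le L_f\|x-y\|_2$. For $H\in\mathbb{S}^p_{++}$ (symmetric positive definite), $\|u\|_H:=\langle Hu,u\rangle^{1/2}$ and $\operatorname{prox}^H_h(x):=\arg\min_u\{h(u)+\tfrac12\|u-x\|_H^2\}$. *)

theory Defs
  imports "HOL-Analysis.Analysis"
begin

definition proper_fun :: "('a \<Rightarrow> ereal) \<Rightarrow> bool" where
  "proper_fun g \<longleftrightarrow> (\<forall>x. g x \<noteq> -\<infinity>) \<and> (\<exists>x. g x < \<infinity>)"

definition closed_fun :: "('a::topological_space \<Rightarrow> ereal) \<Rightarrow> bool" where
  "closed_fun g \<longleftrightarrow> closed {(x, t::real). g x \<le> ereal t}"

definition convex_fun :: "('a::real_vector \<Rightarrow> ereal) \<Rightarrow> bool" where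
  "convex_fun g \<longleftrightarrow> (\<forall>x y t. 0 \<le> t \<and> t \<le> 1 \<longrightarrow>
      g (t *\<^sub>R x + (1 - t) *\<^sub>R y) \<le> ereal t * g x + ereal (1 - t) * g y)"

definition subdiff :: "('a::real_inner \<Rightarrow> ereal) \<Rightarrow> 'a \<Rightarrow> 'a set" where
  "subdiff g x = {\<xi>. \<bar>g x\<bar> \<noteq> \<infinity> \<and> (\<forall>y. g x + ereal (\<xi> \<bullet> (y - x)) \<le> g y)}"

definition strongly_convex_fun :: "real \<Rightarrow> ('a::real_normed_vector \<Rightarrow> real) \<Rightarrow> bool" where
  "strongly_convex_fun \<mu> f \<longleftrightarrow> (\<forall>x y t. 0 \<le> t \<and> t \<le> 1 \<longrightarrow>
      f (t *\<^sub>R x + (1 - t) *\<^sub>R y) \<le> t * f x + (1 - t) * f y - \<mu> / 2 * t * (1 - t) * (norm (x - y))\<^sup>2)"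

definition Hnorm :: "real^'n^'n \<Rightarrow> real^'n \<Rightarrow> real" where
  "Hnorm H u = sqrt ((H *v u) \<bullet> u)"

definition is_proxH :: "real^'n^'n \<Rightarrow> (real^'n \<Rightarrow> ereal) \<Rightarrow> real^'n \<Rightarrow> real^'n \<Rightarrow> bool" where
  "is_proxH H h x u \<longleftrightarrow> (\<forall>v. h u + ereal (1/2 * (Hnorm H (u - x))\<^sup>2) \<le> h v + ereal (1/2 * (Hnorm H (v - x))\<^sup>2))"

end

theory Submission
  imports Defs
begin

lemma sym_inner:
  fixes H :: "real^'n^'n"
  assumes "transpose H = H"
  shows "(H *v a) \<bullet> b = a \<bullet> (H *v b)"
proof -
  have "(H *v a) \<bullet> b = (a v* transpose H) \<bullet> b" by simp
  also have "\<dots> = a \<bullet> (transpose H *v b)" by (rule dot_lmul_matrix)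
  finally show ?thesis using assms by simp
qed

lemma inv_apply:
  fixes H :: "real^'n^'n"
  assumes "\<And>u. u \<noteq> 0 \<Longrightarrow> (H *v u) \<bullet> u > 0"
  shows "H *v (matrix_inv H *v v) = v"
proof -
  have "\<forall>x. H *v x = 0 \<longrightarrow> x = 0" using assms by (metis inner_zero_left less_irrefl)
  then have "\<exists>B. B ** H = mat 1" using matrix_left_invertible_ker by blast
  then have "invertible H" using invertible_left_inverse by blast
  then have "H ** matrix_inv H = mat 1"
    unfolding invertible_def matrix_inv_def by (metis (mono_tags, lifting) someI_ex)
  then show ?thesis by (metis matrix_vector_mul_assoc matrix_vector_mul_lid)
qed

lemma dq_lim:
  assumes "(q has_real_derivative D) (at 0)"
  shows "((\<lambda>t. (q t - q 0) / t) \<longlongrightarrow> D) (at_right 0)"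
proof -
  have "((\<lambda>t. (q t - q 0) / (t - 0)) \<longlongrightarrow> D) (at 0)"
    using assms by (simp add: DERIV_def has_field_derivative_iff)
  then have "((\<lambda>t. (q t - q 0) / t) \<longlongrightarrow> D) (at 0)" by simp
  then show ?thesis by (simp add: filterlim_at_split)
qed

lemma lim_le:
  fixes r s :: "real \<Rightarrow> real"
  assumes "\<And>t. 0 < t \<Longrightarrow> t \<le> 1 \<Longrightarrow> r t \<le> s t"
    and "(r \<longlongrightarrow> R) (at_right 0)" and "(s \<longlongrightarrow> S) (at_right 0)"
  shows "R \<le> S"
proof (rule tendsto_le[OF _ assms(3) assms(2)])
  show "\<forall>\<^sub>F t in at_right 0. r t \<le> s t"
    unfolding eventually_at_right_field
    by (rule exI[of _ 1]) (auto intro: assms(1))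
qed auto

lemma dir_deriv:
  fixes f :: "real^'n \<Rightarrow> real"
  assumes "(f has_derivative (\<lambda>h. G \<bullet> h)) (at x)"
  shows "((\<lambda>t. f (x + t *\<^sub>R w)) has_real_derivative (G \<bullet> w)) (at 0)"
proof -
  have l: "((\<lambda>t::real. x + t *\<^sub>R w) has_derivative (\<lambda>t. t *\<^sub>R w)) (at 0)"
    by (auto intro!: derivative_eq_intros)
  have f0: "(f has_derivative (\<lambda>h. G \<bullet> h)) (at (x + 0 *\<^sub>R w))" using assms by simp
  have "((\<lambda>t. f (x + t *\<^sub>R w)) has_derivative (\<lambda>t. G \<bullet> (t *\<^sub>R w))) (at 0)"
    using diff_chain_at[OF l f0] by (simp add: o_def)
  moreover have "(\<lambda>t. G \<bullet> (t *\<^sub>R w)) = (*) (G \<bullet> w)" by (rule ext) simp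
  ultimately show ?thesis
    unfolding has_field_derivative_def by simp
qed

lemma sc_grad:
  fixes f :: "real^'n \<Rightarrow> real"
  assumes grad: "\<And>y. (f has_derivative (\<lambda>h. gradf y \<bullet> h)) (at y)"
    and sc: "strongly_convex_fun \<mu> f"
  shows "f x + gradf x \<bullet> (y - x) + \<mu> / 2 * (norm (y - x))\<^sup>2 \<le> f y"
proof -
  let ?q = "\<lambda>t. f (x + t *\<^sub>R (y - x))"
  have le: "(?q t - ?q 0) / t \<le> f y - f x - \<mu> / 2 * (1 - t) * (norm (y - x))\<^sup>2"
    if t: "0 < t" "t \<le> 1" for t
  proof -
    have e: "x + t *\<^sub>R (y - x) = t *\<^sub>R y + (1 - t) *\<^sub>R x" by (simp add: algebra_simps)
    have "?q t \<le> t * f y + (1 - t) * f x - \<mu> / 2 * t * (1 - t) * (norm (y - x))\<^sup>2"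
      using sc t unfolding strongly_convex_fun_def e by auto
    then have "?q t - ?q 0 \<le> t * (f y - f x - \<mu> / 2 * (1 - t) * (norm (y - x))\<^sup>2)"
      by (simp add: algebra_simps)
    then show ?thesis using t by (simp add: divide_le_eq mult.commute)
  qed
  have "gradf x \<bullet> (y - x) \<le> f y - f x - \<mu> / 2 * (1 - 0) * (norm (y - x))\<^sup>2"
    by (rule lim_le[OF le dq_lim[OF dir_deriv[OF grad]]]) (auto intro!: tendsto_eq_intros)
  then show ?thesis by simp
qed

lemma strong_mono:
  fixes f :: "real^'n \<Rightarrow> real"
  assumes grad: "\<And>y. (f has_derivative (\<lambda>h. gradf y \<bullet> h)) (at y)"
    and sc: "strongly_convex_fun \<mu> f"
  shows "\<mu> * (norm (a - b))\<^sup>2 \<le> (gradf a - gradf b) \<bullet> (a - b)"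
proof -
  have 1: "f a + gradf a \<bullet> (b - a) + \<mu> / 2 * (norm (b - a))\<^sup>2 \<le> f b" by (rule sc_grad[OF grad sc])
  have 2: "f b + gradf b \<bullet> (a - b) + \<mu> / 2 * (norm (a - b))\<^sup>2 \<le> f a" by (rule sc_grad[OF grad sc])
  have "norm (b - a) = norm (a - b)" by (rule norm_minus_commute)
  moreover have "gradf a \<bullet> (b - a) = - (gradf a \<bullet> (a - b))" by (simp add: inner_diff_right)
  ultimately show ?thesis using 1 2 by (simp add: inner_diff_left)
qed

theorem lemmaB3:
  fixes f :: "real^'n \<Rightarrow> real" and gradf :: "real^'n \<Rightarrow> real^'n"
    and g :: "real^'n \<Rightarrow> ereal"
    and \<mu>f Lf m L :: real
    and x0 \<xi>0 :: "real^'n"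
    and xstar :: "real \<Rightarrow> real^'n"
    and \<tau> :: "nat \<Rightarrow> real"
    and x :: "nat \<Rightarrow> real^'n"
    and H :: "nat \<Rightarrow> real^'n^'n"
    and k :: nat
  assumes grad: "\<And>y. (f has_derivative (\<lambda>h. gradf y \<bullet> h)) (at y)"
    and smooth: "\<And>y z. norm (gradf y - gradf z) \<le> Lf * norm (y - z)"
    and mu_pos: "\<mu>f > 0"
    and sconv: "strongly_convex_fun \<mu>f f"
    and g_proper: "proper_fun g" and g_closed: "closed_fun g" and g_convex: "convex_fun g"
    and x0_dom: "g x0 < \<infinity>"
    and xi0: "\<xi>0 \<in> subdiff g x0"
    and xstar_min: "\<And>t y. 0 < t \<Longrightarrow> t \<le> 1 \<Longrightarrow>
        ereal (t * f (xstar t) - (1 - t) * (\<xi>0 \<bullet> xstar t)) + g (xstar t)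
          \<le> ereal (t * f y - (1 - t) * (\<xi>0 \<bullet> y)) + g y"
    and m_pos: "0 < m" and mL: "m \<le> L"
    and omega: "sqrt ((L - 2 * \<mu>f) * m + Lf\<^sup>2) / m < 1"
    and tau: "\<And>j. 0 < \<tau> j \<and> \<tau> j \<le> 1"
    and x_start: "x 0 = x0"
    and H_sym: "\<And>j. transpose (H j) = H j"
    and H_pd: "\<And>j u. u \<noteq> 0 \<Longrightarrow> (H j *v u) \<bullet> u > 0"
    and H_bounds: "\<And>j u. m * (norm u)\<^sup>2 \<le> (H j *v u) \<bullet> u \<and> (H j *v u) \<bullet> u \<le> L * (norm u)\<^sup>2"
    and iter: "\<And>j. is_proxH (H j) (\<lambda>u. ereal (1 / \<tau> (Suc j)) * g u)
        (x j - matrix_inv (H j) *v (gradf (x j) - (1 / \<tau> (Suc j) - 1) *\<^sub>R \<xi>0)) (x (Suc j))"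
  shows "norm (x (Suc k) - xstar (\<tau> (Suc k)))
           \<le> sqrt ((L - 2 * \<mu>f) * m + Lf\<^sup>2) / m * norm (x k - xstar (\<tau> (Suc k)))"
  proof -
  define tau where "tau = \<tau> (Suc k)"
  define ts where "ts = xstar tau"
  define u where "u = x (Suc k)"
  define xk where "xk = x k"
  define Hk where "Hk = H k"
  define cc where "cc = 1 / tau - 1"
  define y where "y = xk - matrix_inv Hk *v (gradf xk - cc *\<^sub>R \<xi>0)"
  have tpos: "0 < tau" and tle: "tau \<le> 1" using tau unfolding tau_def by auto
  have symH: "\<And>a b. (Hk *v a) \<bullet> b = a \<bullet> (Hk *v b)" unfolding Hk_def by (rule sym_inner[OF H_sym])
  have invH: "\<And>v. Hk *v (matrix_inv Hk *v v) = v" unfolding Hk_def by (rule inv_apply[OF H_pd])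
  have Hnn: "\<And>v. 0 \<le> (Hk *v v) \<bullet> v"
    by (metis H_bounds Hk_def m_pos mult_nonneg_nonneg order.trans less_imp_le zero_le_power2)
  have Hn2: "\<And>v. (Hnorm Hk v)\<^sup>2 = (Hk *v v) \<bullet> v" unfolding Hnorm_def using Hnn by simp
  have quad: "(Hk *v (z + t *\<^sub>R w)) \<bullet> (z + t *\<^sub>R w)
      = (Hk *v z) \<bullet> z + 2 * t * ((Hk *v z) \<bullet> w) + t\<^sup>2 * ((Hk *v w) \<bullet> w)" for z w t
  proof -
    have "(Hk *v w) \<bullet> z = (Hk *v z) \<bullet> w" using symH by (simp add: inner_commute)
    then show ?thesis
      by (simp add: matrix_vector_right_distrib matrix_vector_mult_scaleR inner_add_left inner_add_right
          algebra_simps power2_eq_square)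
  qed
  obtain G0 where G0: "g x0 = ereal G0"
    using x0_dom g_proper unfolding proper_fun_def by (cases "g x0") auto
  have gts_fin: "\<bar>g ts\<bar> \<noteq> \<infinity>"
  proof -
    have "ereal (tau * f ts - (1 - tau) * (\<xi>0 \<bullet> ts)) + g ts
          \<le> ereal (tau * f x0 - (1 - tau) * (\<xi>0 \<bullet> x0)) + g x0"
      using xstar_min[OF tpos tle] unfolding ts_def by blast
    then have "g ts \<noteq> \<infinity>" using G0 by auto
    moreover have "g ts \<noteq> -\<infinity>" using g_proper unfolding proper_fun_def by auto
    ultimately show ?thesis by auto
  qed
  then obtain Gt where Gt: "g ts = ereal Gt" by (cases "g ts") auto
  have gu_fin: "\<bar>g u\<bar> \<noteq> \<infinity>"
  proof -
    have "ereal (1 / tau) * g u + ereal (1/2 * (Hnorm Hk (u - y))\<^sup>2)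
       \<le> ereal (1 / tau) * g x0 + ereal (1/2 * (Hnorm Hk (x0 - y))\<^sup>2)"
      using iter[of k] unfolding is_proxH_def u_def y_def Hk_def tau_def cc_def xk_def by blast
    then have "g u \<noteq> \<infinity>" using G0 tpos by auto
    moreover have "g u \<noteq> -\<infinity>" using g_proper unfolding proper_fun_def by auto
    ultimately show ?thesis by auto
  qed
  then obtain Gu where Gu: "g u = ereal Gu" by (cases "g u") auto
  have segment: "\<exists>r. g (a + t *\<^sub>R (b - a)) = ereal r \<and> r \<le> t * Gb + (1 - t) * Ga"
    if "g a = ereal Ga" "g b = ereal Gb" "0 \<le> t" "t \<le> 1" for a b Ga Gb t
  proof -
    have e: "a + t *\<^sub>R (b - a) = t *\<^sub>R b + (1 - t) *\<^sub>R a" by (simp add: algebra_simps)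
    have "g (a + t *\<^sub>R (b - a)) \<le> ereal t * g b + ereal (1 - t) * g a"
      using g_convex that unfolding convex_fun_def e by blast
    then have le: "g (a + t *\<^sub>R (b - a)) \<le> ereal (t * Gb + (1 - t) * Ga)" using that by simp
    have "g (a + t *\<^sub>R (b - a)) \<noteq> -\<infinity>" using g_proper unfolding proper_fun_def by auto
    then show ?thesis using le by (cases "g (a + t *\<^sub>R (b - a))") auto
  qed
  define e where "e = u - ts"
  define d where "d = xk - ts"
  define Q where "Q = (\<lambda>t. tau * f (ts + t *\<^sub>R e) - (1 - tau) * (\<xi>0 \<bullet> ts + t * (\<xi>0 \<bullet> e)))"
  have QD: "(Q has_real_derivative (tau * (gradf ts \<bullet> e) - (1 - tau) * (\<xi>0 \<bullet> e))) (at 0)"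
    unfolding Q_def using dir_deriv[OF grad, of ts e]
    by (auto intro!: derivative_eq_intros)
  have A_le: "Gt - Gu \<le> (Q t - Q 0) / t" if t: "0 < t" "t \<le> 1" for t
  proof -
    obtain r where r: "g (ts + t *\<^sub>R (u - ts)) = ereal r" "r \<le> t * Gu + (1 - t) * Gt"
      using segment[OF Gt Gu, of t] t by auto
    have "ereal (tau * f ts - (1 - tau) * (\<xi>0 \<bullet> ts)) + g ts
          \<le> ereal (tau * f (ts + t *\<^sub>R e) - (1 - tau) * (\<xi>0 \<bullet> (ts + t *\<^sub>R e))) + g (ts + t *\<^sub>R e)"
      using xstar_min[OF tpos tle] unfolding ts_def by blast
    then have "tau * f ts - (1 - tau) * (\<xi>0 \<bullet> ts) + Gt
          \<le> Q t + r" using r Gt unfolding e_def Q_def by (simp add: inner_add_right)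
    then have "t * (Gt - Gu) \<le> Q t - Q 0" using r(2) unfolding Q_def by (simp add: algebra_simps)
    then show ?thesis using t by (simp add: le_divide_eq mult.commute)
  qed
  have A: "Gt - Gu \<le> tau * (gradf ts \<bullet> e) - (1 - tau) * (\<xi>0 \<bullet> e)"
    by (rule lim_le[OF A_le _ dq_lim[OF QD]]) auto
  define z where "z = u - y"
  have B_le: "(Gu - Gt) / tau \<le> (Hk *v z) \<bullet> (-e) + t / 2 * ((Hk *v (-e)) \<bullet> (-e))"
    if t: "0 < t" "t \<le> 1" for t
  proof -
    obtain r where r: "g (u + t *\<^sub>R (ts - u)) = ereal r" "r \<le> t * Gt + (1 - t) * Gu"
      using segment[OF Gu Gt, of t] t by auto
    have "ereal (1 / tau) * g u + ereal (1/2 * (Hnorm Hk (u - y))\<^sup>2)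
       \<le> ereal (1 / tau) * g (u + t *\<^sub>R (ts - u)) + ereal (1/2 * (Hnorm Hk (u + t *\<^sub>R (ts - u) - y))\<^sup>2)"
      using iter[of k] unfolding is_proxH_def u_def y_def Hk_def tau_def cc_def xk_def by blast
    then have "Gu / tau + 1/2 * (Hnorm Hk z)\<^sup>2 \<le> r / tau + 1/2 * (Hnorm Hk (z + t *\<^sub>R (-e)))\<^sup>2"
      using r Gu unfolding z_def e_def by (simp add: algebra_simps)
    then have "Gu / tau \<le> r / tau + t * ((Hk *v z) \<bullet> (-e)) + t\<^sup>2 / 2 * ((Hk *v (-e)) \<bullet> (-e))"
    proof -
      assume a: "Gu / tau + 1/2 * (Hnorm Hk z)\<^sup>2 \<le> r / tau + 1/2 * (Hnorm Hk (z + t *\<^sub>R (-e)))\<^sup>2"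
      have q: "(Hnorm Hk (z + t *\<^sub>R (-e)))\<^sup>2 = (Hk *v z) \<bullet> z + 2 * t * ((Hk *v z) \<bullet> (-e)) + t\<^sup>2 * ((Hk *v (-e)) \<bullet> (-e))"
        by (simp only: Hn2 quad)
      have q0: "(Hnorm Hk z)\<^sup>2 = (Hk *v z) \<bullet> z" by (rule Hn2)
      show ?thesis using a unfolding q q0 by (simp add: algebra_simps)
    qed
    moreover have "r / tau \<le> (t * Gt + (1 - t) * Gu) / tau" using r(2) tpos by (simp add: divide_right_mono)
    ultimately have "t * ((Gu - Gt) / tau) \<le> t * ((Hk *v z) \<bullet> (-e) + t / 2 * ((Hk *v (-e)) \<bullet> (-e)))"
      by (simp add: algebra_simps add_divide_distrib diff_divide_distrib power2_eq_square)
    then show ?thesis using t(1) by (rule mult_left_le_imp_le)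
  qed
  have B0: "(Gu - Gt) / tau \<le> (Hk *v z) \<bullet> (-e) + 0 / 2 * ((Hk *v (-e)) \<bullet> (-e))"
    by (rule lim_le[OF B_le]) (auto intro!: tendsto_eq_intros)
  then have B: "Gu - Gt \<le> - tau * ((Hk *v z) \<bullet> e)" using tpos by (simp add: divide_le_eq mult.commute)
  have sum: "0 \<le> gradf ts \<bullet> e - cc * (\<xi>0 \<bullet> e) - (Hk *v z) \<bullet> e"
  proof -
    have "0 \<le> tau * (gradf ts \<bullet> e) - (1 - tau) * (\<xi>0 \<bullet> e) - tau * ((Hk *v z) \<bullet> e)"
      using A B by linarith
    also have "\<dots> = tau * (gradf ts \<bullet> e - cc * (\<xi>0 \<bullet> e) - (Hk *v z) \<bullet> e)"
      unfolding cc_def using tpos by (simp add: algebra_simps)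
    finally show ?thesis using tpos by (simp add: zero_le_mult_iff)
  qed
  define \<Delta> where "\<Delta> = gradf xk - gradf ts"
  define w where "w = matrix_inv Hk *v \<Delta>"
  have Hw: "Hk *v w = \<Delta>" unfolding w_def by (rule invH)
  have Hz: "Hk *v z = Hk *v e - Hk *v d + gradf xk - cc *\<^sub>R \<xi>0"
  proof -
    have "Hk *v y = Hk *v xk - (gradf xk - cc *\<^sub>R \<xi>0)"
      unfolding y_def by (simp add: matrix_vector_mult_diff_distrib invH)
    moreover have "u = e + ts" "xk = d + ts" unfolding e_def d_def by simp_all
    ultimately show ?thesis unfolding z_def
      by (simp add: matrix_vector_mult_diff_distrib matrix_vector_right_distrib algebra_simps)
  qed
  have key: "(Hk *v e) \<bullet> e \<le> (Hk *v (d - w)) \<bullet> e"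
    using sum unfolding Hz \<Delta>_def
    by (simp add: matrix_vector_mult_diff_distrib Hw inner_diff_left inner_add_left \<Delta>_def algebra_simps)
  have cs: "(Hk *v e) \<bullet> e \<le> (Hk *v (d - w)) \<bullet> (d - w)"
  proof -
    have "0 \<le> (Hk *v ((d - w) - e)) \<bullet> ((d - w) - e)" by (rule Hnn)
    also have "\<dots> = (Hk *v (d - w)) \<bullet> (d - w) - 2 * ((Hk *v (d - w)) \<bullet> e) + (Hk *v e) \<bullet> e"
      using symH[of e "d - w"]
      by (simp add: matrix_vector_mult_diff_distrib inner_diff_left inner_diff_right inner_commute)
    finally show ?thesis using key by linarith
  qed
  have expand: "(Hk *v (d - w)) \<bullet> (d - w) = (Hk *v d) \<bullet> d - 2 * (\<Delta> \<bullet> d) + \<Delta> \<bullet> w"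
    using symH[of w d] Hw
    by (simp add: matrix_vector_mult_diff_distrib inner_diff_left inner_diff_right inner_commute)
  have b1: "m * (norm e)\<^sup>2 \<le> (Hk *v e) \<bullet> e" using H_bounds unfolding Hk_def by blast
  have b2: "(Hk *v d) \<bullet> d \<le> L * (norm d)\<^sup>2" using H_bounds unfolding Hk_def by blast
  have b3: "\<mu>f * (norm d)\<^sup>2 \<le> \<Delta> \<bullet> d"
    unfolding \<Delta>_def d_def by (rule strong_mono[OF grad sconv])
  have b4: "m * (\<Delta> \<bullet> w) \<le> (norm \<Delta>)\<^sup>2"
  proof -
    have mw: "m * (norm w)\<^sup>2 \<le> \<Delta> \<bullet> w" using H_bounds[of w k] Hw unfolding Hk_def by simp
    have dw: "\<Delta> \<bullet> w \<le> norm \<Delta> * norm w" using norm_cauchy_schwarz by blast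
    have "m * norm w \<le> norm \<Delta>"
    proof (cases "norm w = 0")
      case True then show ?thesis by simp
    next
      case False
      then have "0 < norm w" by simp
      moreover have "(m * norm w) * norm w \<le> norm \<Delta> * norm w"
        using mw dw by (simp add: power2_eq_square mult.assoc)
      ultimately show ?thesis by simp
    qed
    then have "norm \<Delta> * (m * norm w) \<le> norm \<Delta> * norm \<Delta>" by (simp add: mult_left_mono)
    moreover have "m * (\<Delta> \<bullet> w) \<le> m * (norm \<Delta> * norm w)" using dw m_pos by simp
    ultimately show ?thesis by (simp add: power2_eq_square algebra_simps)
  qed
  have b5: "(norm \<Delta>)\<^sup>2 \<le> Lf\<^sup>2 * (norm d)\<^sup>2"
  proof -
    have "norm \<Delta> \<le> Lf * norm d" unfolding \<Delta>_def d_def by (rule smooth)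
    then have "(norm \<Delta>)\<^sup>2 \<le> (Lf * norm d)\<^sup>2" by (rule power_mono) simp
    then show ?thesis by (simp add: power_mult_distrib)
  qed
  define R where "R = (L - 2 * \<mu>f) * m + Lf\<^sup>2"
  have main: "m\<^sup>2 * (norm e)\<^sup>2 \<le> R * (norm d)\<^sup>2"
  proof -
    have "m * (norm e)\<^sup>2 \<le> L * (norm d)\<^sup>2 - 2 * (\<mu>f * (norm d)\<^sup>2) + \<Delta> \<bullet> w"
      using b1 b2 b3 cs expand by linarith
    then have "m * (m * (norm e)\<^sup>2) \<le> m * (L * (norm d)\<^sup>2 - 2 * (\<mu>f * (norm d)\<^sup>2)) + m * (\<Delta> \<bullet> w)"
      using m_pos by (metis distrib_left mult_left_mono less_imp_le)
    also have "\<dots> \<le> m * (L * (norm d)\<^sup>2 - 2 * (\<mu>f * (norm d)\<^sup>2)) + Lf\<^sup>2 * (norm d)\<^sup>2"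
      using b4 b5 by linarith
    finally show ?thesis unfolding R_def by (simp add: power2_eq_square algebra_simps)
  qed
  have "norm e \<le> sqrt R / m * norm d"
  proof (cases "R \<ge> 0")
    case True
    have "(norm e)\<^sup>2 \<le> (sqrt R / m * norm d)\<^sup>2"
      using main m_pos True by (simp add: power_mult_distrib power_divide field_simps)
    moreover have "0 \<le> sqrt R / m * norm d" using True m_pos by simp
    ultimately show ?thesis by (rule power2_le_imp_le)
  next
    case False
    have "0 \<le> m\<^sup>2 * (norm e)\<^sup>2" by simp
    have "norm d = 0"
    proof (rule ccontr)
      assume "norm d \<noteq> 0"
      then have "0 < (norm d)\<^sup>2" by simp
      then have "R * (norm d)\<^sup>2 < 0" using False by (simp add: mult_neg_pos)
      then show False using main \<open>0 \<le> m\<^sup>2 * (norm e)\<^sup>2\<close> by linarith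
    qed
    then have "m\<^sup>2 * (norm e)\<^sup>2 \<le> 0" using main by simp
    then have "norm e = 0" using m_pos by (simp add: mult_le_0_iff)
    then show ?thesis using \<open>norm d = 0\<close> by simp
  qed
  then show ?thesis unfolding e_def d_def R_def u_def ts_def tau_def xk_def .
qed

end
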